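(* Let $n$ be a positive integer and let $D$ be a set of divisors of $n$ such that $\gcd(D\cup\{n\})=1$. Let $t$ be the size of a smallest subset of $D$ which generates $\mathbb{Z}_n$ as an additive group. Let $S=\bigcup_{d\in D}G_n(d)$ and $\mathcal G=G(n;S)$. Then $$t\leq \operatorname{diam}\mathcal G\leq 2t+1.$$
   Context: For a divisor $d$ of $n$, $G_n(d)=\{k : 1\le k\le n-1,\ \gcd(k,n)=d\}$. For a set $S\subseteq\{1,\dots,n-1\}$ with $s\in S$ iff $n-s\in S$, the circulant graph $G(n;S)$ is the undirected graph on vertex set $\mathbb{Z}_n$ in which $i$ and $j$ are adjacent iff $i-j \bmod n\in S$. $\operatorname{diam}$ denotes the graph diameter (maximum over vertex pairs of the shortest-path distance). *)

theory Defs
  imports Main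
begin

definition Gn :: "nat \<Rightarrow> nat \<Rightarrow> nat set" where
  "Gn n d = {k. 1 \<le> k \<and> k \<le> n - 1 \<and> gcd k n = d}"

definition circ_edges :: "nat \<Rightarrow> nat set \<Rightarrow> (nat \<times> nat) set" where
  "circ_edges n S = {(i, j). i < n \<and> j < n \<and> nat ((int i - int j) mod int n) \<in> S}"

definition circ_dist :: "nat \<Rightarrow> nat set \<Rightarrow> nat \<Rightarrow> nat \<Rightarrow> nat" where
  "circ_dist n S i j = (LEAST k. (i, j) \<in> (circ_edges n S) ^^ k)"

definition circ_diam :: "nat \<Rightarrow> nat set \<Rightarrow> nat" where
  "circ_diam n S = Max {circ_dist n S i j | i j. i < n \<and> j < n}"

definition generates_Zn :: "nat \<Rightarrow> nat set \<Rightarrow> bool" where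
  "generates_Zn n D' = (\<forall>x::int. \<exists>c :: nat \<Rightarrow> int. x mod int n = (\<Sum>d\<in>D'. c d * int d) mod int n)"

end

theory Submission
  imports Defs "HOL-Number_Theory.Number_Theory"
begin

lemma coprime_test:
  fixes x :: int and m :: nat
  assumes "\<And>p. prime p \<Longrightarrow> p dvd m \<Longrightarrow> \<not> int p dvd x"
  shows "coprime x (int m)"
proof (rule ccontr)
  assume nc: "\<not> coprime x (int m)"
  define g where "g = gcd x (int m)"
  have g0: "g \<ge> 0" unfolding g_def by simp
  have "g \<noteq> 1" using nc unfolding g_def by (simp add: coprime_iff_gcd_eq_1)
  then have "nat g \<noteq> 1" using g0 by auto
  then obtain p where p: "prime p" "p dvd nat g" using prime_factor_nat by blast
  then have "int p dvd int (nat g)" by (simp only: of_nat_dvd_iff)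
  then have "int p dvd g" using g0 by simp
  then have "int p dvd x" "int p dvd int m" unfolding g_def by auto
  then show False using assms p by simp
qed

lemma pow_fact_cong:
  fixes a p m :: nat
  assumes "prime p" "p dvd m" "m > 0" "\<not> p dvd a"
  shows "int p dvd int a ^ fact m - 1"
proof -
  have "p \<le> m" using assms by (simp add: dvd_imp_le)
  have p1: "p - 1 \<ge> 1" using prime_ge_2_nat[OF assms(1)] by simp
  have "(p - 1) dvd fact m" using dvd_fact[of "p - 1" m] p1 \<open>p \<le> m\<close> by simp
  then obtain q where q: "fact m = (p - 1) * q" by blast
  have "[a ^ (p - 1) = 1] (mod p)" using fermat_theorem assms by blast
  then have "[(a ^ (p - 1)) ^ q = 1 ^ q] (mod p)" by (rule cong_pow)
  then have "[a ^ fact m = 1] (mod p)" by (simp add: q power_mult)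
  then have "[int a ^ fact m = 1] (mod int p)" by (metis cong_int_iff of_nat_1 of_nat_power)
  then show ?thesis by (simp add: cong_iff_dvd_diff)
qed

lemma two_units:
  fixes a m :: nat
  assumes "m > 0" "odd m \<or> even a"
  defines "u \<equiv> 1 - int a ^ fact m * (1 + int a)"
  shows "coprime u (int m) \<and> coprime (int a - u) (int m)"
proof -
  have key: "\<not> int p dvd u \<and> \<not> int p dvd (int a - u)" if p: "prime p" "p dvd m" for p
  proof (cases "p dvd a")
    case True
    then have "int p dvd int a" by simp
    moreover have "fact m \<noteq> (0::nat)" by simp
    have "int a dvd int a ^ fact m" by (rule dvd_power) (simp add: fact_gt_zero)
    ultimately have "int p dvd int a ^ fact m" using dvd_trans by blast
    moreover have "1 - u = int a ^ fact m * (1 + int a)" unfolding u_def by simp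
    ultimately have h: "int p dvd 1 - u" by (metis dvd_mult2)
    have np1: "\<not> int p dvd 1"
    proof
      assume "int p dvd 1"
      then have "int p \<le> 1" by (rule zdvd_imp_le) simp
      then show False using prime_gt_1_nat[OF p(1)] by simp
    qed
    have "\<not> int p dvd u"
    proof
      assume "int p dvd u"
      then have "int p dvd (1 - u) + u" using h by (rule dvd_add[rotated])
      then show False using np1 by simp
    qed
    moreover have "\<not> int p dvd (int a - u)"
    proof
      assume "int p dvd (int a - u)"
      then have "int p dvd int a - (int a - u)" using \<open>int p dvd int a\<close> by (rule dvd_diff[rotated])
      then show False using \<open>\<not> int p dvd u\<close> by simp
    qed
    ultimately show ?thesis by blast
  next
    case False
    have h: "int p dvd int a ^ fact m - 1" using pow_fact_cong p assms(1) False by blast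
    have e1: "u + int a = - ((int a ^ fact m - 1) * (1 + int a))" unfolding u_def by (simp add: algebra_simps)
    have d1: "int p dvd u + int a" unfolding e1 using h by simp
    have npa: "\<not> int p dvd int a" using False by simp
    have "\<not> int p dvd u"
    proof
      assume "int p dvd u"
      then have "int p dvd (u + int a) - u" using d1 by (rule dvd_diff[rotated])
      then show False using npa by simp
    qed
    moreover have "\<not> int p dvd (int a - u)"
    proof
      assume "int p dvd (int a - u)"
      then have "int p dvd (int a - u) + (u + int a)" using d1 by (rule dvd_add)
      moreover have "(int a - u) + (u + int a) = 2 * int a" by simp
      ultimately have "int p dvd 2 * int a" by simp
      then have "p dvd 2 * a" by (metis of_nat_dvd_iff of_nat_mult of_nat_numeral)
      then have "p dvd 2" using False p prime_dvd_mult_iff by blast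
      then have "p \<le> 2" by (rule dvd_imp_le) simp
      then have "p = 2" using prime_ge_2_nat[OF p(1)] by simp
      then show False using assms(2) p False by auto
    qed
    ultimately show ?thesis by blast
  qed
  show ?thesis using key by (auto intro!: coprime_test)
qed

fun Pset :: "nat \<Rightarrow> nat set \<Rightarrow> nat \<Rightarrow> int set" where
  "Pset n S 0 = {0}"
| "Pset n S (Suc k) = {(y + int s) mod int n | y s. y \<in> Pset n S k \<and> s \<in> S}"

lemma Pset_range: "n > 0 \<Longrightarrow> y \<in> Pset n S k \<Longrightarrow> 0 \<le> y \<and> y < int n"
  by (cases k) auto

lemma Pset_mod: "n > 0 \<Longrightarrow> y \<in> Pset n S k \<Longrightarrow> y mod int n = y"
  using Pset_range by (simp add: mod_pos_pos_trivial)

lemma walk_iff: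
  assumes n: "n > 0" and S: "\<forall>s\<in>S. s < n"
  shows "i < n \<Longrightarrow> j < n \<Longrightarrow>
    (i, j) \<in> circ_edges n S ^^ k \<longleftrightarrow> (int i - int j) mod int n \<in> Pset n S k"
proof (induction k arbitrary: j)
  case 0
  have "(int i - int j) mod int n = 0 \<longleftrightarrow> i = j"
  proof
    assume "(int i - int j) mod int n = 0"
    then have "[int i = int j] (mod int n)" by (simp add: cong_iff_dvd_diff dvd_eq_mod_eq_0)
    then have "[i = j] (mod n)" by (simp add: cong_int_iff)
    then show "i = j" using 0 by (simp add: cong_def)
  qed simp
  then show ?case by auto
next
  case (Suc k)
  show ?case
  proof
    assume "(i, j) \<in> circ_edges n S ^^ Suc k"
    then obtain m where m: "(i, m) \<in> circ_edges n S ^^ k" "(m, j) \<in> circ_edges n S" by auto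
    from m(2) have mn: "m < n" and s: "nat ((int m - int j) mod int n) \<in> S"
      unfolding circ_edges_def by auto
    have y: "(int i - int m) mod int n \<in> Pset n S k" using Suc.IH[OF Suc.prems(1) mn] m(1) by simp
    have "int (nat ((int m - int j) mod int n)) = (int m - int j) mod int n" using n by simp
    then have "((int i - int m) mod int n + int (nat ((int m - int j) mod int n))) mod int n
       = (int i - int j) mod int n" by (simp add: mod_add_eq)
    then show "(int i - int j) mod int n \<in> Pset n S (Suc k)" using y s by force
  next
    assume "(int i - int j) mod int n \<in> Pset n S (Suc k)"
    then obtain y s where ys: "(int i - int j) mod int n = (y + int s) mod int n"
      "y \<in> Pset n S k" "s \<in> S" by auto
    define m where "m = nat ((int j + int s) mod int n)"
    have mi: "int m = (int j + int s) mod int n" unfolding m_def using n by simp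
    have mn: "m < n" using mi n by (metis of_nat_0_less_iff of_nat_less_iff pos_mod_bound)
    have sn: "int s mod int n = int s" using S ys(3) by (simp add: mod_pos_pos_trivial)
    have "(int m - int j) mod int n = int s"
      using sn by (simp add: mi mod_diff_left_eq)
    then have e: "(m, j) \<in> circ_edges n S" using mn Suc.prems ys(3) unfolding circ_edges_def by simp
    have "(int i - int m) mod int n = (int i - int j - int s) mod int n"
      by (simp add: mi mod_diff_right_eq algebra_simps)
    also have "\<dots> = ((int i - int j) mod int n - int s) mod int n" by (simp add: mod_diff_left_eq)
    also have "\<dots> = ((y + int s) - int s) mod int n" by (simp add: ys(1) mod_diff_left_eq)
    also have "\<dots> = y" using Pset_mod[OF n ys(2)] by simp
    finally have "(i, m) \<in> circ_edges n S ^^ k" using Suc.IH[OF Suc.prems(1) mn] ys(2) by simp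
    then show "(i, j) \<in> circ_edges n S ^^ Suc k" using e by auto
  qed
qed

lemma Pset_add:
  assumes n: "n > 0" and a: "a \<in> Pset n S k"
  shows "b \<in> Pset n S l \<Longrightarrow> (a + b) mod int n \<in> Pset n S (k + l)"
proof (induction l arbitrary: b)
  case 0
  then show ?case using Pset_mod[OF n a] a by simp
next
  case (Suc l)
  then obtain y s where b: "b = (y + int s) mod int n" "y \<in> Pset n S l" "s \<in> S" by auto
  have "(a + b) mod int n = ((a + y) mod int n + int s) mod int n"
    unfolding b(1) by (metis mod_add_left_eq mod_add_right_eq add.assoc)
  then show ?case using Suc.IH[OF b(2)] b(3) by auto
qed

definition Qset :: "nat \<Rightarrow> nat set \<Rightarrow> nat \<Rightarrow> int set" where
  "Qset n S k = {x. \<exists>k'\<le>k. x \<in> Pset n S k'}"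

lemma Qset_add:
  assumes "n > 0" "a \<in> Qset n S k" "b \<in> Qset n S l"
  shows "(a + b) mod int n \<in> Qset n S (k + l)"
  proof -
  obtain k' l' where "k' \<le> k" "l' \<le> l" "a \<in> Pset n S k'" "b \<in> Pset n S l'"
    using assms unfolding Qset_def by blast
  then have "(a + b) mod int n \<in> Pset n S (k' + l')" using Pset_add[OF assms(1)] by blast
  moreover have "k' + l' \<le> k + l" using \<open>k' \<le> k\<close> \<open>l' \<le> l\<close> by simp
  ultimately show ?thesis unfolding Qset_def by blast
qed

lemma Qset_mono: "x \<in> Qset n S k \<Longrightarrow> k \<le> l \<Longrightarrow> x \<in> Qset n S l"
  unfolding Qset_def by (auto intro: order_trans)

lemma Gn_elem:
  assumes n: "n > 0" and d: "d dvd n" "d < n" and u: "coprime u (int (n div d))"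
  shows "nat ((int d * u) mod int n) \<in> Gn n d"
proof -
  define m where "m = n div d"
  have nd: "n = d * m" using d unfolding m_def by simp
  have d0: "d > 0" using n nd by (metis gr0I mult_0)
  have "gcd (int d * u) (int n) = int d * gcd u (int m)"
    unfolding nd by (simp add: gcd_mult_left abs_mult)
  also have "\<dots> = int d" using u unfolding m_def by simp
  finally have g1: "gcd (int d * u) (int n) = int d" .
  define x where "x = (int d * u) mod int n"
  have x0: "0 \<le> x" "x < int n" unfolding x_def using n by auto
  have "gcd x (int n) = int d" unfolding x_def using g1 gcd_mod_left[of "int n" "int d * u"] n by simp
  then have "gcd (int (nat x)) (int n) = int d" using x0 by simp
  then have "int (gcd (nat x) n) = int d" by (simp only: gcd_int_int_eq)
  then have g: "gcd (nat x) n = d" by (simp only: of_nat_eq_iff)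
  have "nat x \<noteq> 0" using g d by auto
  moreover have "nat x < n" using x0 by simp
  ultimately show ?thesis unfolding Gn_def x_def[symmetric] using g by auto
qed

lemma good_two:
  assumes n: "n > 0" and d: "d dvd n" and GS: "Gn n d \<subseteq> S"
    and good: "odd (n div d) \<or> even c"
  shows "(c * int d) mod int n \<in> Qset n S 2"
proof (cases "d = n")
  case True
  then have "(c * int d) mod int n = 0" by simp
  then show ?thesis unfolding Qset_def by (auto intro!: exI[of _ 0])
next
  case False
  have "d \<le> n" using d n by (simp add: dvd_imp_le)
  with False have dn: "d < n" by simp
  define m where "m = n div d"
  have nd: "n = d * m" using d unfolding m_def by simp
  have m0: "m > 0" using n nd by (cases m) auto
  define a where "a = nat (c mod int m)"
  have ai: "int a = c mod int m" unfolding a_def using m0 by simp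
  have ga: "odd m \<or> even a"
  proof (cases "odd m")
    case False
    then have "even c" using good m_def by simp
    moreover have "even (int m)" using False by simp
    ultimately have "even (c mod int m)" by (rule dvd_mod)
    then have "even (int a)" by (simp only: ai)
    then show ?thesis by simp
  qed simp
  define u where "u = 1 - int a ^ fact m * (1 + int a)"
  have cu: "coprime u (int m)" "coprime (int a - u) (int m)"
    using two_units[OF m0 ga] unfolding u_def by auto
  define s1 where "s1 = nat ((int d * u) mod int n)"
  define s2 where "s2 = nat ((int d * (int a - u)) mod int n)"
  have s1: "s1 \<in> S" using Gn_elem[OF n d dn] cu GS unfolding s1_def m_def by auto
  have s2: "s2 \<in> S" using Gn_elem[OF n d dn] cu GS unfolding s2_def m_def by auto
  have i1: "int s1 = (int d * u) mod int n" unfolding s1_def using n by simp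
  have i2: "int s2 = (int d * (int a - u)) mod int n" unfolding s2_def using n by simp
  have p1: "int s1 \<in> Pset n S 1"
  proof -
    have "(0 + int s1) mod int n = int s1" using i1 by simp
    then show ?thesis using s1 by (auto intro!: exI[of _ 0] exI[of _ s1])
  qed
  have p2: "(int s1 + int s2) mod int n \<in> Pset n S 2"
  proof -
    have "(int s1 + int s2) mod int n \<in> Pset n S (Suc 1)"
      using p1 s2 by (subst Pset.simps(2)) blast
    moreover have "Suc 1 = 2" by simp
    ultimately show ?thesis by metis
  qed
  have "(int s1 + int s2) mod int n = (int d * u + int d * (int a - u)) mod int n"
    unfolding i1 i2 by (simp add: mod_add_eq)
  also have "\<dots> = (int d * (c mod int m)) mod int n" by (simp add: ai[symmetric] algebra_simps)
  also have "\<dots> = (c * int d) mod int n"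
  proof -
    have "int d * (c mod int m) = c * int d - int n * (c div int m)"
      unfolding nd by (simp add: minus_div_mult_eq_mod[symmetric] algebra_simps)
    then show ?thesis by (simp add: mod_diff_right_eq[symmetric])
  qed
  finally show ?thesis using p2 unfolding Qset_def by auto
qed

lemma sum_good:
  assumes n: "n > 0" and fin: "finite A"
    and h: "\<forall>d\<in>A. d dvd n \<and> Gn n d \<subseteq> S \<and> (odd (n div d) \<or> even (c d))"
  shows "(\<Sum>d\<in>A. c d * int d) mod int n \<in> Qset n S (2 * card A)"
  using fin h
proof (induction A rule: finite_induct)
  case empty
  then show ?case unfolding Qset_def by auto
next
  case (insert x F)
  have a: "(c x * int x) mod int n \<in> Qset n S 2" using good_two[OF n] insert by auto
  have b: "(\<Sum>d\<in>F. c d * int d) mod int n \<in> Qset n S (2 * card F)" using insert by auto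
  have "((c x * int x) mod int n + (\<Sum>d\<in>F. c d * int d) mod int n) mod int n \<in> Qset n S (2 + 2 * card F)"
    using Qset_add[OF n a b] .
  then show ?case using insert by (simp add: mod_add_eq)
qed

lemma comb:
  assumes "1 mod int n = (\<Sum>d\<in>A. a d * int d) mod int n"
  shows "(\<Sum>d\<in>A. (z * a d) * int d) mod int n = z mod int n"
proof -
  have "(\<Sum>d\<in>A. (z * a d) * int d) = z * (\<Sum>d\<in>A. a d * int d)"
    by (simp add: sum_distrib_left algebra_simps)
  then have "(\<Sum>d\<in>A. (z * a d) * int d) mod int n = (z * ((\<Sum>d\<in>A. a d * int d) mod int n)) mod int n"
    by (simp add: mod_mult_right_eq)
  also have "\<dots> = (z * (1 mod int n)) mod int n" using assms by simp
  also have "\<dots> = z mod int n" by (simp add: mod_mult_right_eq)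
  finally show ?thesis .
qed

lemma comb_generates:
  assumes "1 mod int n = (\<Sum>d\<in>A. a d * int d) mod int n"
  shows "generates_Zn n A"
  unfolding generates_Zn_def
proof
  fix x :: int
  show "\<exists>c. x mod int n = (\<Sum>d\<in>A. c d * int d) mod int n"
    using comb[OF assms, of x] by (intro exI[of _ "\<lambda>d. x * a d"]) simp
qed

lemma bezout_set:
  fixes A :: "nat set"
  assumes "finite A"
  shows "\<exists>c. int (Gcd A) = (\<Sum>a\<in>A. c a * int a)"
  using assms
proof (induction A rule: finite_induct)
  case empty
  then show ?case by simp
next
  case (insert x F)
  then obtain c where c: "int (Gcd F) = (\<Sum>a\<in>F. c a * int a)" by blast
  obtain u v where uv: "u * int x + v * int (Gcd F) = gcd (int x) (int (Gcd F))"
    using bezout_int by blast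
  define c' where "c' = (\<lambda>e. if e = x then u else v * c e)"
  have "(\<Sum>a\<in>insert x F. c' a * int a) = u * int x + (\<Sum>a\<in>F. v * (c a * int a))"
  proof -
    have "(\<Sum>a\<in>F. c' a * int a) = (\<Sum>a\<in>F. v * (c a * int a))"
      using insert(2) by (intro sum.cong) (auto simp: c'_def)
    then show ?thesis using insert(1,2) by (simp add: c'_def)
  qed
  also have "\<dots> = u * int x + v * int (Gcd F)" by (simp add: c sum_distrib_left)
  also have "\<dots> = int (Gcd (insert x F))" using uv by (simp add: Gcd_insert)
  finally show ?case by metis
qed

lemma reach_upper:
  assumes n: "n > 0" and fin: "finite D0" and dv: "\<forall>d\<in>D0. d dvd n"
    and gen: "generates_Zn n D0" and GS: "\<forall>d\<in>D0. Gn n d \<subseteq> S"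
  shows "x mod int n \<in> Qset n S (2 * card D0 + 1)"
proof -
  obtain a where a: "1 mod int n = (\<Sum>d\<in>D0. a d * int d) mod int n"
    using gen unfolding generates_Zn_def by blast
  have Q: "z mod int n \<in> Qset n S (2 * card D0)" if ev: "even n \<Longrightarrow> even z" for z
  proof -
    have h: "\<forall>d\<in>D0. d dvd n \<and> Gn n d \<subseteq> S \<and> (odd (n div d) \<or> even (z * a d))"
    proof
      fix d assume d: "d \<in> D0"
      have "odd (n div d) \<or> even (z * a d)"
      proof (cases "even n")
        case True then show ?thesis using ev by simp
      next
        case False
        from dv d obtain k where k: "n = d * k" by (auto elim: dvdE)
        have "d \<noteq> 0" using n k by (cases d) auto
        then have "n div d = k" using k by simp
        then have "n div d dvd n" using k by simp
        then have "odd (n div d)" using False dvd_trans by blast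
        then show ?thesis by simp
      qed
      then show "d dvd n \<and> Gn n d \<subseteq> S \<and> (odd (n div d) \<or> even (z * a d))"
        using dv GS d by blast
    qed
    have "(\<Sum>d\<in>D0. (z * a d) * int d) mod int n \<in> Qset n S (2 * card D0)"
      using sum_good[OF n fin h] .
    then show ?thesis using comb[OF a, of z] by simp
  qed
  show ?thesis
  proof (cases "even n \<longrightarrow> even x")
    case True
    then show ?thesis using Q[of x] Qset_mono by (metis le_add1)
  next
    case False
    then have en: "even n" and ox: "odd x" by auto
    from en obtain k where "n = 2 * k" by (auto elim: evenE)
    then have n2: "n \<ge> 2" using n by simp
    obtain d1 where d1: "d1 \<in> D0" "odd d1"
    proof (rule ccontr)
      assume "\<not> thesis"
      then have alle: "\<forall>d\<in>D0. even d" using that by blast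
      have "even (\<Sum>d\<in>D0. a d * int d)" using alle by (auto intro!: dvd_sum)
      moreover have "even (int n)" using en by simp
      ultimately have "even ((\<Sum>d\<in>D0. a d * int d) mod int n)" by (rule dvd_mod)
      moreover have "1 mod int n = 1" using n2 by simp
      ultimately show False using a by simp
    qed
    have d1n: "d1 dvd n" using dv d1 by blast
    have "d1 \<noteq> n" using d1 en by auto
    moreover have "d1 \<le> n" using d1n n by (simp add: dvd_imp_le)
    ultimately have d1lt: "d1 < n" by simp
    have d1pos: "d1 > 0" using d1 by (cases d1) auto
    have "d1 \<in> Gn n d1" unfolding Gn_def using d1lt d1pos d1n by (auto simp: gcd_nat.absorb1)
    then have d1S: "d1 \<in> S" using GS d1 by blast
    have "int d1 = (0 + int d1) mod int n" using d1lt by simp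
    then have "int d1 \<in> Pset n S (Suc 0)" using d1S by (simp only: Pset.simps) blast
    then have q1: "int d1 \<in> Qset n S 1" unfolding Qset_def One_nat_def by blast
    have "even (x - int d1)" using ox d1 by simp
    then have q2: "(x - int d1) mod int n \<in> Qset n S (2 * card D0)" using Q by blast
    have "((x - int d1) mod int n + int d1) mod int n \<in> Qset n S (2 * card D0 + 1)"
      using Qset_add[OF n q2 q1] .
    moreover have "((x - int d1) mod int n + int d1) mod int n = x mod int n"
      by (simp add: mod_add_left_eq)
    ultimately show ?thesis by simp
  qed
qed

lemma rep_lower:
  assumes n: "n > 0" and dv: "\<forall>d\<in>D. d dvd n"
  shows "y \<in> Pset n (\<Union>d\<in>D. Gn n d) k \<Longrightarrow>
    \<exists>D''. D'' \<subseteq> D \<and> finite D'' \<and> card D'' \<le> k \<and> (\<exists>c. y = (\<Sum>d\<in>D''. c d * int d) mod int n)"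
proof (induction k arbitrary: y)
  case 0
  then show ?case by (intro exI[of _ "{}"]) auto
next
  case (Suc k)
  then obtain y' s d where ys: "y = (y' + int s) mod int n" "y' \<in> Pset n (\<Union>d\<in>D. Gn n d) k"
    "d \<in> D" "s \<in> Gn n d" by auto
  obtain D'' c where D'': "D'' \<subseteq> D" "finite D''" "card D'' \<le> k"
    "y' = (\<Sum>d\<in>D''. c d * int d) mod int n"
    using Suc.IH[OF ys(2)] by blast
  have "gcd s n = d" using ys(4) unfolding Gn_def by simp
  then have "d dvd s" by (metis gcd_dvd1)
  then obtain q where q: "s = d * q" by blast
  define c' where "c' = (\<lambda>e. if e = d then (if d \<in> D'' then c d else 0) + int q else c e)"
  have sum: "(\<Sum>e\<in>insert d D''. c' e * int e) = (\<Sum>e\<in>D''. c e * int e) + int s"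
  proof (cases "d \<in> D''")
    case True
    then have ins: "insert d D'' = D''" by blast
    have "(\<Sum>e\<in>D''. c' e * int e) = (\<Sum>e\<in>D''. c e * int e + (if e = d then int q * int d else 0))"
      by (intro sum.cong) (auto simp: c'_def True algebra_simps)
    also have "\<dots> = (\<Sum>e\<in>D''. c e * int e) + int q * int d"
      using True D''(2) by (simp add: sum.distrib)
    finally show ?thesis using ins q by (simp add: algebra_simps)
  next
    case False
    have "(\<Sum>e\<in>D''. c' e * int e) = (\<Sum>e\<in>D''. c e * int e)"
      using False by (intro sum.cong) (auto simp: c'_def)
    then show ?thesis using False D''(2) q by (simp add: c'_def algebra_simps)
  qed
  have "y = ((\<Sum>e\<in>D''. c e * int e) + int s) mod int n"
    using ys(1) D''(4) by (simp add: mod_add_left_eq)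
  then have "y = (\<Sum>e\<in>insert d D''. c' e * int e) mod int n" using sum by simp
  moreover have "card (insert d D'') \<le> Suc k" using D''(2,3) by (simp add: card_insert_if)
  ultimately show ?case using D'' ys(3) by (intro exI[of _ "insert d D''"]) auto
qed

theorem theorem4:
  fixes n :: nat and D :: "nat set" and t :: nat
  assumes "n > 0"
    and "\<forall>d\<in>D. d dvd n"
    and "Gcd (D \<union> {n}) = 1"
    and "t = Min (card ` {D'. D' \<subseteq> D \<and> generates_Zn n D'})"
  shows "t \<le> circ_diam n (\<Union>d\<in>D. Gn n d) \<and> circ_diam n (\<Union>d\<in>D. Gn n d) \<le> 2 * t + 1"
proof -
  note n = assms(1) and dv = assms(2)
  define S where "S = (\<Union>d\<in>D. Gn n d)"
  define F where "F = {D'. D' \<subseteq> D \<and> generates_Zn n D'}"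
  have Sn: "\<forall>s\<in>S. s < n" unfolding S_def Gn_def using n by auto
  have finD: "finite D"
  proof (rule finite_subset)
    show "D \<subseteq> {..n}" using dv n by (auto simp: dvd_imp_le)
  qed simp
  have finF: "finite F" unfolding F_def using finD by (auto intro: finite_subset[of _ "Pow D"])
  have DF: "D \<in> F"
  proof -
    obtain c where c: "int (Gcd (D \<union> {n})) = (\<Sum>a\<in>D \<union> {n}. c a * int a)"
      using bezout_set[of "D \<union> {n}"] finD by auto
    have "(\<Sum>a\<in>D \<union> {n}. c a * int a) mod int n = (\<Sum>a\<in>D. c a * int a) mod int n"
    proof (cases "n \<in> D")
      case True
      then have "D \<union> {n} = D" by blast
      then show ?thesis by simp
    next
      case False
      then have "(\<Sum>a\<in>D \<union> {n}. c a * int a) = c n * int n + (\<Sum>a\<in>D. c a * int a)"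
        using finD by simp
      then show ?thesis by simp
    qed
    then have "1 mod int n = (\<Sum>a\<in>D. c a * int a) mod int n" using c assms(3) by simp
    then show ?thesis unfolding F_def using comb_generates by blast
  qed
  have "t \<in> card ` F" unfolding assms(4) F_def[symmetric] using finF DF by (intro Min_in) auto
  then obtain D0 where D0: "D0 \<in> F" "card D0 = t" by blast
  have finD0: "finite D0" using D0 finD unfolding F_def by (auto intro: finite_subset)
  have GS: "\<forall>d\<in>D0. Gn n d \<subseteq> S" using D0 unfolding F_def S_def by auto
  have dv0: "\<forall>d\<in>D0. d dvd n" using D0 dv unfolding F_def by auto
  have gen0: "generates_Zn n D0" using D0 unfolding F_def by auto
  have conn: "\<exists>k\<le>2 * t + 1. (i, j) \<in> circ_edges n S ^^ k" if ij: "i < n" "j < n" for i j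
  proof -
    have "(int i - int j) mod int n \<in> Qset n S (2 * card D0 + 1)"
      using reach_upper[OF n finD0 dv0 gen0 GS] by blast
    then obtain k where "k \<le> 2 * t + 1" "(int i - int j) mod int n \<in> Pset n S k"
      unfolding Qset_def D0(2) by blast
    then show ?thesis using walk_iff[OF n Sn ij] by blast
  qed
  have distle: "circ_dist n S i j \<le> 2 * t + 1" if ij: "i < n" "j < n" for i j
  proof -
    obtain k where k: "k \<le> 2 * t + 1" "(i, j) \<in> circ_edges n S ^^ k" using conn[OF ij] by blast
    have "circ_dist n S i j \<le> k" unfolding circ_dist_def using k(2) by (rule Least_le)
    then show ?thesis using k(1) by simp
  qed
  define M where "M = {circ_dist n S i j | i j. i < n \<and> j < n}"
  have finM: "finite M"
  proof -
    have "M \<subseteq> (\<lambda>(i, j). circ_dist n S i j) ` ({..<n} \<times> {..<n})" unfolding M_def by auto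
    then show ?thesis by (rule finite_subset) simp
  qed
  have neM: "M \<noteq> {}" unfolding M_def using n by blast
  have up: "circ_diam n S \<le> 2 * t + 1"
    unfolding circ_diam_def M_def[symmetric] using finM neM distle unfolding M_def by (auto intro!: Max.boundedI)
  have low: "t \<le> circ_diam n S"
  proof (cases "n = 1")
    case True
    have "generates_Zn n {}" unfolding generates_Zn_def True by simp
    then have "{} \<in> F" unfolding F_def by simp
    then have "card ({}::nat set) \<in> card ` F" by (rule imageI)
    then have "t \<le> card ({}::nat set)" unfolding assms(4) F_def[symmetric] using finF by (intro Min_le) auto
    then show ?thesis by simp
  next
    case False
    then have n1: "1 < n" using n by simp
    define k0 where "k0 = circ_dist n S 1 0"
    have "\<exists>k. (1, 0) \<in> circ_edges n S ^^ k" using conn[of 1 0] n1 n by blast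
    then have "(1, 0) \<in> circ_edges n S ^^ k0" unfolding k0_def circ_dist_def by (rule LeastI_ex)
    then have "(int 1 - int 0) mod int n \<in> Pset n S k0" using walk_iff[OF n Sn n1 n] by blast
    then have "1 mod int n \<in> Pset n S k0" by simp
    then obtain D'' c where D'': "D'' \<subseteq> D" "finite D''" "card D'' \<le> k0"
      "1 mod int n = (\<Sum>d\<in>D''. c d * int d) mod int n"
      using rep_lower[OF n dv] unfolding S_def by (metis mod_mod_trivial)
    have "D'' \<in> F" unfolding F_def using D''(1) comb_generates[OF D''(4)] by blast
    then have "card D'' \<in> card ` F" by (rule imageI)
    then have "t \<le> card D''" unfolding assms(4) F_def[symmetric] using finF by (intro Min_le) auto
    also have "\<dots> \<le> k0" by fact
    also have "k0 \<le> circ_diam n S"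
      unfolding circ_diam_def M_def[symmetric] k0_def using finM n1 n unfolding M_def
    proof (intro Max_ge)
      show "circ_dist n S 1 0 \<in> {circ_dist n S i j |i j. i < n \<and> j < n}" using n1 n by blast
    qed (use finM in \<open>auto simp: M_def\<close>)
    finally show ?thesis .
  qed
  show ?thesis using up low unfolding S_def by simp
qed

end
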